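(* Let $\mathcal H=H^1_0([0,1];\mathbb R^d)$ and, for $n\ge1$, let $\mathcal H_n\subset\mathcal H$ be the subspace of functions which are affine on each interval $[i/n,(i+1)/n]$, $i=0,\dots,n-1$. Then for each $1<q<2$ there is $C_q$ such that $\epsilon_q(\mathcal H_n,\mathcal H)\le C_q\,n^{\frac1q-1}$ for all $n\ge1$.
   Context: $H^1_0$ consists of absolutely continuous $f$ with $f_0=0$, with norm $\|f\|_{H^1}^2=\int_0^1|\dot f|^2$. For a closed subspace $\tilde{\mathcal H}\subset\mathcal H$ with orthogonal projection $\tilde\pi$, $\epsilon_q(\tilde{\mathcal H},\mathcal H)=\sup_{h\in\mathcal H}\frac{\|h-\tilde\pi(h)\|_{q\text{-var};[0,1]}}{\|h\|_{\mathcal H}}$, where $\|f\|_{q\text{-var}}^q=\sup_{0=t_0\le\dots\le t_m=1}\sum_i|f_{t_{i+1}}-f_{t_i}|^q$. *)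

theory Defs
  imports "HOL-Analysis.Analysis"
begin

definition L2_01 :: "(real \<Rightarrow> 'a::euclidean_space) \<Rightarrow> bool" where
  "L2_01 g \<longleftrightarrow> g absolutely_integrable_on {0..1} \<and> (\<lambda>s. (norm (g s))\<^sup>2) integrable_on {0..1}"

text \<open>The Cameron--Martin space H^1_0([0,1];R^d): absolutely continuous paths starting at 0
  with square integrable derivative, i.e. f t = integral over [0,t] of g with g in L^2.
  Paths are normalised to be 0 outside [0,1] so that they are determined by their values on [0,1].\<close>
definition H10 :: "(real \<Rightarrow> 'a::euclidean_space) set" where
  "H10 = {f. \<exists>g. L2_01 g \<and> (\<forall>t\<in>{0..1}. f t = integral {0..t} g) \<and> (\<forall>t. t \<notin> {0..1} \<longrightarrow> f t = 0)}"

text \<open>A derivative (a.e. unique) of an element of H10.\<close>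
definition H_deriv :: "(real \<Rightarrow> 'a::euclidean_space) \<Rightarrow> real \<Rightarrow> 'a" where
  "H_deriv f = (SOME g. L2_01 g \<and> (\<forall>t\<in>{0..1}. f t = integral {0..t} g))"

definition H_inner :: "(real \<Rightarrow> 'a::euclidean_space) \<Rightarrow> (real \<Rightarrow> 'a) \<Rightarrow> real" where
  "H_inner f k = integral {0..1} (\<lambda>s. H_deriv f s \<bullet> H_deriv k s)"

definition H_norm :: "(real \<Rightarrow> 'a::euclidean_space) \<Rightarrow> real" where
  "H_norm f = sqrt (integral {0..1} (\<lambda>s. (norm (H_deriv f s))\<^sup>2))"

definition H_proj :: "(real \<Rightarrow> 'a::euclidean_space) set \<Rightarrow> (real \<Rightarrow> 'a) \<Rightarrow> (real \<Rightarrow> 'a)" where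
  "H_proj S h = (THE p. p \<in> S \<and> (\<forall>k\<in>S. H_inner (\<lambda>t. h t - p t) k = 0))"

definition Hn :: "nat \<Rightarrow> (real \<Rightarrow> 'a::euclidean_space) set" where
  "Hn n = {f \<in> H10. \<forall>i<n. \<exists>a b. \<forall>t\<in>{real i / real n .. real (Suc i) / real n}. f t = a + t *\<^sub>R b}"

definition qvar_pow :: "real \<Rightarrow> (real \<Rightarrow> 'a::real_normed_vector) \<Rightarrow> ereal" where
  "qvar_pow q f = (SUP mt \<in> {(m, t). t 0 = 0 \<and> t m = 1 \<and> (\<forall>i<m. t i \<le> t (Suc i))}.
      ereal (\<Sum>i<fst mt. (norm (f (snd mt (Suc i)) - f (snd mt i))) powr q))"

definition qvar_norm :: "real \<Rightarrow> (real \<Rightarrow> 'a::real_normed_vector) \<Rightarrow> ereal" where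
  "qvar_norm q f = (case qvar_pow q f of ereal x \<Rightarrow> ereal (x powr (1 / q)) | _ \<Rightarrow> \<infinity>)"

definition eps_q :: "real \<Rightarrow> (real \<Rightarrow> 'a::euclidean_space) set \<Rightarrow> ereal" where
  "eps_q q S = (SUP h \<in> {h \<in> H10. H_norm h \<noteq> 0}.
      qvar_norm q (\<lambda>t. h t - H_proj S h t) / ereal (H_norm h))"

end

theory Submission
  imports Defs
begin

lemma AE_zero_lborel:
  fixes g :: "real \<Rightarrow> real"
  assumes g: "integrable lborel g" and z: "\<And>x. integral {x<..} g = 0"
  shows "AE y in lborel. g y = 0"
proof -
  have gm[measurable]: "g \<in> borel_measurable borel" using g by auto
  define M where "M = density lborel (\<lambda>x. ennreal (max 0 (g x)))"
  define N where "N = density lborel (\<lambda>x. ennreal (max 0 (- g x)))"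
  have ip: "integrable lborel (\<lambda>y. max 0 (g y))" "integrable lborel (\<lambda>y. max 0 (- g y))"
    using g by (auto intro: integrable_max integrable_minus)
  have iip: "integrable lborel (\<lambda>y. indicator {x<..} y * max 0 (g y))"
    "integrable lborel (\<lambda>y. indicator {x<..} y * max 0 (- g y))"
    "integrable lborel (\<lambda>y. indicator {x<..} y * g y)" for x :: real
    using ip g by (auto intro!: integrable_mult_indicator[where 'b=real, simplified])
  have eqI: "(\<integral>y. indicator {x<..} y * g y \<partial>lborel) = 0" for x
  proof -
    have "set_integrable lborel {x<..} g"
      using iip(3)[of x] by (simp add: set_integrable_def)
    from set_borel_integral_eq_integral(2)[OF this] z[of x]
    show ?thesis by (simp add: set_lebesgue_integral_def)
  qed
  have "M = N"
  proof (rule measure_eqI_lessThan)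
    show "sets M = sets borel" "sets N = sets borel" by (simp_all add: M_def N_def)
    fix x :: real
    have eM: "emeasure M {x<..} = ennreal (\<integral>y. indicator {x<..} y * max 0 (g y) \<partial>lborel)"
      unfolding M_def
      apply (subst emeasure_density, simp, simp)
      apply (subst nn_integral_eq_integral[symmetric])
      using iip(1)[of x] apply (auto simp: indicator_def intro!: nn_integral_cong)
      done
    have eN: "emeasure N {x<..} = ennreal (\<integral>y. indicator {x<..} y * max 0 (- g y) \<partial>lborel)"
      unfolding N_def
      apply (subst emeasure_density, simp, simp)
      apply (subst nn_integral_eq_integral[symmetric])
      using iip(2)[of x] apply (auto simp: indicator_def intro!: nn_integral_cong)
      done
    show "emeasure M {x<..} < \<infinity>" using eM by simp
    have "(\<integral>y. indicator {x<..} y * max 0 (g y) \<partial>lborel) - (\<integral>y. indicator {x<..} y * max 0 (- g y) \<partial>lborel)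
        = (\<integral>y. indicator {x<..} y * g y \<partial>lborel)"
      apply (subst Bochner_Integration.integral_diff[symmetric])
      using iip apply auto[2]
      apply (rule Bochner_Integration.integral_cong, simp)
      apply (auto simp: indicator_def max_def)
      done
    then show "emeasure M {x<..} = emeasure N {x<..}" using eM eN eqI[of x] by simp
  qed
  then have "AE y in lborel. ennreal (max 0 (g y)) = ennreal (max 0 (- g y))"
    unfolding M_def N_def
    by (intro sigma_finite_measure.density_unique[OF sigma_finite_lborel]) auto
  then show ?thesis
    by eventually_elim (auto simp: max_def split: if_splits)
qed

lemma negl_zero_real:
  fixes h :: "real \<Rightarrow> real"
  assumes h: "h absolutely_integrable_on {a..b}"
    and z: "\<And>t. t \<in> {a..b} \<Longrightarrow> integral {a..t} h = 0"
  shows "negligible {x \<in> {a..b}. h x \<noteq> 0}"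
proof -
  define g0 where "g0 = (\<lambda>y. if y \<in> {a..b} then h y else 0)"
  have "g0 absolutely_integrable_on UNIV"
    unfolding g0_def using h absolutely_integrable_restrict_UNIV by blast
  then have ig0: "integrable lebesgue g0"
    by (simp add: set_integrable_def)
  then have "g0 \<in> borel_measurable (completion lborel)" by auto
  then obtain g where gb: "g \<in> borel_measurable lborel" and gae: "AE x in lborel. g0 x = g x"
    using completion_ex_borel_measurable_real by blast
  have "(\<integral>\<^sup>+ x. ennreal (norm (g0 x)) \<partial>lborel) = (\<integral>\<^sup>+ x. ennreal (norm (g x)) \<partial>lborel)"
    using gae by (intro nn_integral_cong_AE) auto
  then have ig: "integrable lborel g"
    using ig0 gb by (auto simp: integrable_iff_bounded nn_integral_completion cong: nn_integral_cong_AE)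
  have hI: "(h has_integral 0) {x..b}" if "a \<le> x" "x \<le> b" for x
  proof -
    have hi: "h integrable_on {a..b}" using h absolutely_integrable_on_def by blast
    have "integral {a..x} h + integral {x..b} h = integral {a..b} h"
      using Henstock_Kurzweil_Integration.integral_combine[OF that hi] .
    then have "integral {x..b} h = 0" using z[of x] z[of b] that by auto
    moreover have "h integrable_on {x..b}"
      by (rule integrable_subinterval_real[OF hi]) (use that in auto)
    ultimately show ?thesis using integrable_integral by fastforce
  qed
  have "integral {x<..} g = 0" for x
  proof -
    have "(g0 has_integral 0) {x<..}"
    proof -
      have "(h has_integral 0) ({a..b} \<inter> {x<..})"
      proof (cases "a \<le> b")
        case False then show ?thesis by simp
      next
        case ab: True
        show ?thesis
        proof (cases "x < a")
          case True
          then have "{a..b} \<inter> {x<..} = {a..b}" by auto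
          then show ?thesis using hI[of a] ab by simp
        next
          case False
          show ?thesis
          proof (cases "x < b")
            case True
            have e: "{a..b} \<inter> {x<..} = {x<..b}" using False by auto
            have "(h has_integral 0) {x..b}" using hI[of x] False True by simp
            moreover have "(h has_integral 0) {x..b} \<longleftrightarrow> (h has_integral 0) {x<..b}"
            proof (rule has_integral_spike_set_eq)
              show "negligible {y \<in> {x..b} - {x<..b}. h y \<noteq> 0}" by (rule negligible_subset[of "{x}"]) auto
              have "{y \<in> {x<..b} - {x..b}. h y \<noteq> 0} = {}" by auto
              then show "negligible {y \<in> {x<..b} - {x..b}. h y \<noteq> 0}" by (metis negligible_empty)
            qed
            ultimately show ?thesis unfolding e by simp
          next
            case False2: False
            then have "{a..b} \<inter> {x<..} = {}" by auto
            then show ?thesis by simp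
          qed
        qed
      qed
      then show ?thesis unfolding g0_def using has_integral_restrict_Int by blast
    qed
    moreover have "AE y in lborel. y \<in> {x<..} \<longrightarrow> g0 y = g y" using gae by auto
    ultimately have "(g has_integral 0) {x<..}"
      using has_integral_AE[of "{x<..}" g0 g] by blast
    then show ?thesis by (rule integral_unique)
  qed
  then have "AE y in lborel. g y = 0" using AE_zero_lborel[OF ig] by blast
  then have "AE y in lborel. g0 y = 0" using gae by eventually_elim auto
  then obtain N where N: "N \<in> sets borel" "emeasure lborel N = 0" "{y. \<not> g0 y = 0} \<subseteq> N"
    by (auto elim!: AE_E)
  have "negligible N" using N by (simp add: negligible_iff_emeasure0) 
  then show ?thesis
    by (rule negligible_subset) (use N(3) in \<open>auto simp: g0_def\<close>)
qed

lemma ae_const: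
  fixes K :: "real \<Rightarrow> 'a::euclidean_space"
  assumes K: "K absolutely_integrable_on {a..b}"
    and z: "\<And>t. t \<in> {a..b} \<Longrightarrow> integral {a..t} K = (t - a) *\<^sub>R c"
  shows "negligible {x \<in> {a..b}. K x \<noteq> c}"
proof -
  have "negligible {x \<in> {a..b}. (K x - c) \<bullet> e \<noteq> 0}" if e: "e \<in> Basis" for e
  proof (rule negl_zero_real)
    have "(\<lambda>x. K x - c) absolutely_integrable_on {a..b}"
      using K by (intro set_integral_diff(1)) auto
    then show "(\<lambda>x. (K x - c) \<bullet> e) absolutely_integrable_on {a..b}"
      by (rule absolutely_integrable_component)
    fix t assume t: "t \<in> {a..b}"
    have Ki: "K integrable_on {a..t}"
      using K t absolutely_integrable_on_def integrable_subinterval_real[of K a b a t] by auto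
    have "integral {a..t} (\<lambda>x. (K x - c) \<bullet> e) = integral {a..t} (\<lambda>x. K x - c) \<bullet> e"
      using Ki by (intro integral_component_eq integrable_diff integrable_const_ivl) auto
    also have "integral {a..t} (\<lambda>x. K x - c) = integral {a..t} K - integral {a..t} (\<lambda>x. c)"
      using Ki by (intro integral_diff) auto
    also have "\<dots> = 0" using z[OF t] t by (simp add: content_real)
    finally show "integral {a..t} (\<lambda>x. (K x - c) \<bullet> e) = 0" by simp
  qed
  then have "negligible (\<Union>e\<in>Basis. {x \<in> {a..b}. (K x - c) \<bullet> e \<noteq> 0})"
    by (intro negligible_Union) auto
  moreover have "{x \<in> {a..b}. K x \<noteq> c} \<subseteq> (\<Union>e\<in>Basis. {x \<in> {a..b}. (K x - c) \<bullet> e \<noteq> 0})"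
  proof
    fix x assume "x \<in> {x \<in> {a..b}. K x \<noteq> c}"
    then have "K x - c \<noteq> 0" "x \<in> {a..b}" by auto
    then obtain e where "e \<in> Basis" "(K x - c) \<bullet> e \<noteq> 0"
      using euclidean_all_zero_iff by blast
    then show "x \<in> (\<Union>e\<in>Basis. {x \<in> {a..b}. (K x - c) \<bullet> e \<noteq> 0})" using \<open>x \<in> {a..b}\<close> by auto
  qed
  ultimately show ?thesis using negligible_subset by blast
qed

lemma sum_partition:
  fixes f :: "real \<Rightarrow> 'b::banach" and t :: "nat \<Rightarrow> real"
  assumes mono: "\<And>i. i < m \<Longrightarrow> t i \<le> t (Suc i)"
    and int: "\<And>i. i < m \<Longrightarrow> f integrable_on {t i..t (Suc i)}"
  shows "t 0 \<le> t m \<and> f integrable_on {t 0..t m} \<and> integral {t 0..t m} f = (\<Sum>i<m. integral {t i..t (Suc i)} f)"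
  using assms
proof (induction m)
  case 0
  then show ?case by (metis integrable_on_refl cbox_interval sum.empty integral_refl order_refl lessThan_0)
next
  case (Suc m)
  then have IH: "t 0 \<le> t m" "f integrable_on {t 0..t m}" "integral {t 0..t m} f = (\<Sum>i<m. integral {t i..t (Suc i)} f)"
    by auto
  have le: "t m \<le> t (Suc m)" and im: "f integrable_on {t m..t (Suc m)}" using Suc.prems by auto
  have I: "f integrable_on {t 0..t (Suc m)}"
    using Henstock_Kurzweil_Integration.integrable_combine[OF IH(1) le IH(2) im] .
  have "integral {t 0..t m} f + integral {t m..t (Suc m)} f = integral {t 0..t (Suc m)} f"
    using Henstock_Kurzweil_Integration.integral_combine[OF IH(1) le I] .
  then show ?case using IH le I by simp
qed

lemma H10_rep:
  assumes "f \<in> H10"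
  shows "L2_01 (H_deriv f) \<and> (\<forall>t\<in>{0..1}. f t = integral {0..t} (H_deriv f))"
proof -
  from assms obtain g where "L2_01 g \<and> (\<forall>t\<in>{0..1}. f t = integral {0..t} g)"
    unfolding H10_def by blast
  then show ?thesis unfolding H_deriv_def
    by (rule someI[where P="\<lambda>g. L2_01 g \<and> (\<forall>t\<in>{0..1}. f t = integral {0..t} g)"])
qed

lemma H10_out: "f \<in> H10 \<Longrightarrow> t \<notin> {0..1} \<Longrightarrow> f t = 0"
  unfolding H10_def by blast

lemma H10_I: "L2_01 g \<Longrightarrow> (\<And>t. t\<in>{0..1} \<Longrightarrow> f t = integral {0..t} g) \<Longrightarrow> (\<And>t. t \<notin> {0..1} \<Longrightarrow> f t = 0) \<Longrightarrow> f \<in> H10"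
  unfolding H10_def by blast

lemma L2_int:
  fixes g :: "real \<Rightarrow> 'a::euclidean_space"
  assumes "L2_01 g" "0 \<le> a" "b \<le> 1"
  shows "g integrable_on {a..b}" "g absolutely_integrable_on {a..b}"
    "(\<lambda>x. norm (g x)) integrable_on {a..b}" "(\<lambda>x. (norm (g x))\<^sup>2) integrable_on {a..b}"
proof -
  have s: "{a..b} \<subseteq> {0..1}" using assms by auto
  show "g absolutely_integrable_on {a..b}"
    using assms(1) s unfolding L2_01_def using absolutely_integrable_on_subinterval by blast
  then show "g integrable_on {a..b}" "(\<lambda>x. norm (g x)) integrable_on {a..b}"
    using absolutely_integrable_on_def by blast+
  show "(\<lambda>x. (norm (g x))\<^sup>2) integrable_on {a..b}"
    using assms(1) s unfolding L2_01_def by (meson integrable_on_subinterval)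
qed

lemma rep_diff:
  fixes g :: "real \<Rightarrow> 'a::euclidean_space"
  assumes "L2_01 g" "\<forall>t\<in>{0..1}. f t = integral {0..t} g" "0 \<le> s" "s \<le> t" "t \<le> 1"
  shows "integral {s..t} g = f t - f s"
proof -
  have "g integrable_on {0..t}" using L2_int assms by auto
  then have "integral {0..s} g + integral {s..t} g = integral {0..t} g"
    using assms by (intro Henstock_Kurzweil_Integration.integral_combine) auto
  then have "integral {s..t} g = integral {0..t} g - integral {0..s} g"
    by (metis add_diff_cancel_left')
  then show ?thesis using assms by auto
qed

lemma sq_sum_le: fixes a b :: real shows "(a+b)^2 \<le> 2*a^2 + 2*b^2"
proof -
  have "0 \<le> (a-b)^2" by simp
  then show ?thesis by (simp add: power2_eq_square algebra_simps)
qed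

lemma L2_01_diff:
  fixes g1 g2 :: "real \<Rightarrow> 'a::euclidean_space"
  assumes "L2_01 g1" "L2_01 g2"
  shows "L2_01 (\<lambda>x. g1 x - g2 x)"
proof -
  have a: "(\<lambda>x. g1 x - g2 x) absolutely_integrable_on {0..1}"
    using assms unfolding L2_01_def by (intro set_integral_diff(1)) auto
  then have "(\<lambda>x. g1 x - g2 x) \<in> borel_measurable (lebesgue_on {0..1})"
    using a absolutely_integrable_on_def integrable_imp_measurable by blast
  then have m: "(\<lambda>x. (norm (g1 x - g2 x))\<^sup>2) \<in> borel_measurable (lebesgue_on {0..1})"
    by measurable
  have i: "(\<lambda>x. 2 * (norm (g1 x))\<^sup>2 + 2 * (norm (g2 x))\<^sup>2) integrable_on {0..1}"
    using assms unfolding L2_01_def by (intro integrable_add integrable_on_cmult_left) auto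
  have "(\<lambda>x. (norm (g1 x - g2 x))\<^sup>2) integrable_on {0..1}"
  proof (rule measurable_bounded_by_integrable_imp_integrable[OF m i])
    fix x
    have "norm (g1 x - g2 x) \<le> norm (g1 x) + norm (g2 x)" by (rule norm_triangle_ineq4)
    then have "(norm (g1 x - g2 x))\<^sup>2 \<le> (norm (g1 x) + norm (g2 x))\<^sup>2"
      by (simp add: power_mono)
    also have "\<dots> \<le> 2 * (norm (g1 x))\<^sup>2 + 2 * (norm (g2 x))\<^sup>2"
      by (rule sq_sum_le)
    finally show "norm ((norm (g1 x - g2 x))\<^sup>2) \<le> 2 * (norm (g1 x))\<^sup>2 + 2 * (norm (g2 x))\<^sup>2" by simp
  qed auto
  then show ?thesis using a unfolding L2_01_def by blast
qed

lemma H10_diff: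
  assumes "f1 \<in> H10" "f2 \<in> H10"
  shows "(\<lambda>t. f1 t - f2 t) \<in> H10"
proof (rule H10_I)
  show "L2_01 (\<lambda>x. H_deriv f1 x - H_deriv f2 x)" using H10_rep[OF assms(1)] H10_rep[OF assms(2)]
    by (intro L2_01_diff) auto
  fix t
  show "t \<in> {0..1} \<Longrightarrow> f1 t - f2 t = integral {0..t} (\<lambda>x. H_deriv f1 x - H_deriv f2 x)"
    using H10_rep[OF assms(1)] H10_rep[OF assms(2)]
    by (subst integral_diff) (auto intro: L2_int)
  show "t \<notin> {0..1} \<Longrightarrow> f1 t - f2 t = 0" using H10_out[OF assms(1)] H10_out[OF assms(2)] by simp
qed

lemma grid_cover:
  assumes n: "n \<ge> (1::nat)" and t: "t \<in> {0..1::real}"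
  shows "\<exists>i<n. t \<in> {real i / real n .. real (Suc i) / real n}"
proof (cases "t = 1")
  case True
  then show ?thesis using n by (intro exI[of _ "n - 1"]) (auto simp: field_simps of_nat_diff)
next
  case False
  have np: "real n > 0" using n by simp
  define z where "z = \<lfloor>t * n\<rfloor>"
  have z0: "0 \<le> z" unfolding z_def using t by simp
  have z1: "of_int z \<le> t * n" "t * n < of_int z + 1" unfolding z_def by linarith+
  have tn: "t * n < n" using t False np by (simp add: mult_less_cancel_right1)
  then have "z < int n" using z1 by linarith
  then have i: "nat z < n" using z0 by (simp add: nat_less_iff)
  have "real (nat z) = of_int z" using z0 by simp
  then show ?thesis using z1 i np
    by (intro exI[of _ "nat z"]) (auto simp: field_simps)
qed

lemma grid_props:
  assumes "n \<ge> (1::nat)" "i < n"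
  shows "0 \<le> real i / real n" "real i / real n \<le> real (Suc i) / real n" "real (Suc i) / real n \<le> 1"
  using assms by (auto simp: field_simps)

lemma inner_formula:
  fixes f k :: "real \<Rightarrow> 'a::euclidean_space"
  assumes n: "n \<ge> 1" and f: "f \<in> H10" and k: "k \<in> H10"
    and aff: "\<And>i t. i < n \<Longrightarrow> t \<in> {real i / real n .. real (Suc i) / real n} \<Longrightarrow> k t = A i + t *\<^sub>R B i"
  shows "H_inner f k = (\<Sum>i<n. (f (real (Suc i) / real n) - f (real i / real n)) \<bullet> B i)"
proof -
  define F where "F = H_deriv f"
  define K where "K = H_deriv k"
  have Fr: "L2_01 F" "\<forall>t\<in>{0..1}. f t = integral {0..t} F" using H10_rep[OF f] F_def by auto
  have Kr: "L2_01 K" "\<forall>t\<in>{0..1}. k t = integral {0..t} K" using H10_rep[OF k] K_def by auto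
  define tt where "tt = (\<lambda>i. real i / real n)"
  have piece: "((\<lambda>x. F x \<bullet> K x) has_integral ((f (tt (Suc i)) - f (tt i)) \<bullet> B i)) {tt i..tt (Suc i)}"
    if i: "i < n" for i
  proof -
    have g: "0 \<le> tt i" "tt i \<le> tt (Suc i)" "tt (Suc i) \<le> 1" using grid_props[OF n i] tt_def by auto
    have neg: "negligible {x \<in> {tt i..tt (Suc i)}. K x \<noteq> B i}"
    proof (rule ae_const)
      show "K absolutely_integrable_on {tt i..tt (Suc i)}" using L2_int[OF Kr(1)] g by auto
      fix t assume t: "t \<in> {tt i..tt (Suc i)}"
      have "integral {tt i..t} K = k t - k (tt i)"
        using rep_diff[OF Kr(1) Kr(2)] g t by auto
      also have "\<dots> = (t - tt i) *\<^sub>R B i"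
        using aff[OF i, of t] aff[OF i, of "tt i"] t g unfolding tt_def
        by (auto simp: algebra_simps)
      finally show "integral {tt i..t} K = (t - tt i) *\<^sub>R B i" .
    qed
    moreover have fint: "((\<lambda>x. F x \<bullet> B i) has_integral ((f (tt (Suc i)) - f (tt i)) \<bullet> B i)) {tt i..tt (Suc i)}"
    proof -
      have Fi: "F integrable_on {tt i..tt (Suc i)}" using L2_int[OF Fr(1)] g by auto
      have "(F has_integral (f (tt (Suc i)) - f (tt i))) {tt i..tt (Suc i)}"
        using rep_diff[OF Fr(1) Fr(2), of "tt i" "tt (Suc i)"] g Fi
        by (metis integrable_integral)
      then show ?thesis using has_integral_linear[OF _ bounded_linear_inner_left] by (auto simp: o_def)
    qed
    show ?thesis
      by (rule has_integral_spike[OF neg _ fint]) auto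
  qed
  have "tt 0 \<le> tt n \<and> (\<lambda>x. F x \<bullet> K x) integrable_on {tt 0..tt n} \<and>
     integral {tt 0..tt n} (\<lambda>x. F x \<bullet> K x) = (\<Sum>i<n. integral {tt i..tt (Suc i)} (\<lambda>x. F x \<bullet> K x))"
    by (rule sum_partition) (use piece grid_props[OF n] tt_def in auto)
  moreover have "tt 0 = 0" "tt n = 1" using n unfolding tt_def by auto
  ultimately have "integral {0..1} (\<lambda>x. F x \<bullet> K x) = (\<Sum>i<n. integral {tt i..tt (Suc i)} (\<lambda>x. F x \<bullet> K x))"
    by simp
  also have "\<dots> = (\<Sum>i<n. (f (tt (Suc i)) - f (tt i)) \<bullet> B i)"
    using piece by (intro sum.cong) (auto intro: integral_unique)
  finally show ?thesis unfolding H_inner_def F_def K_def tt_def .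
qed

definition gp :: "nat \<Rightarrow> nat \<Rightarrow> real" where "gp n i = real i / real n"

definition cvec :: "nat \<Rightarrow> (real \<Rightarrow> 'a::euclidean_space) \<Rightarrow> nat \<Rightarrow> 'a" where
  "cvec n h i = real n *\<^sub>R (h (gp n (Suc i)) - h (gp n i))"

definition Pd :: "nat \<Rightarrow> (real \<Rightarrow> 'a::euclidean_space) \<Rightarrow> real \<Rightarrow> 'a" where
  "Pd n h x = (\<Sum>j<n. if x \<in> {gp n j..gp n (Suc j)} then cvec n h j else 0)"

definition interp :: "nat \<Rightarrow> (real \<Rightarrow> 'a::euclidean_space) \<Rightarrow> real \<Rightarrow> 'a" where
  "interp n h t = (if t \<in> {0..1} then integral {0..t} (Pd n h) else 0)"

definition ilen :: "real \<Rightarrow> real \<Rightarrow> real \<Rightarrow> real \<Rightarrow> real" where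
  "ilen a b u v = (if max a u \<le> min b v then min b v - max a u else 0)"

lemma piece_int:
  fixes c :: "'a::euclidean_space"
  shows "(\<lambda>x. if x \<in> {a..b} then c else 0) integrable_on {u..v::real}"
    "integral {u..v} (\<lambda>x. if x \<in> {a..b} then c else 0) = ilen a b u v *\<^sub>R c"
proof -
  have e: "{a..b} \<inter> {u..v} = {max a u..min b v}" by auto
  show "(\<lambda>x. if x \<in> {a..b} then c else 0) integrable_on {u..v::real}"
    using integrable_restrict_Int[of "{a..b}" "\<lambda>x. c" "{u..v}"] e by auto
  show "integral {u..v} (\<lambda>x. if x \<in> {a..b} then c else 0) = ilen a b u v *\<^sub>R c"
    using integral_restrict_Int[of "{u..v}" "{a..b}" "\<lambda>x. c"] e integral_const_real[of "max a u" "min b v" c]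
    by (simp add: ilen_def)
qed

lemma Pd_int:
  "Pd n h integrable_on {u..v}"
  "integral {u..v} (Pd n h) = (\<Sum>j<n. ilen (gp n j) (gp n (Suc j)) u v *\<^sub>R cvec n h j)"
proof -
  have "(\<lambda>x. \<Sum>j<n. if x \<in> {gp n j..gp n (Suc j)} then cvec n h j else 0) integrable_on {u..v}"
    by (intro integrable_sum) (auto simp del: atLeastAtMost_iff intro: piece_int)
  then show "Pd n h integrable_on {u..v}" unfolding Pd_def[abs_def] .
  have "integral {u..v} (\<lambda>x. \<Sum>j<n. if x \<in> {gp n j..gp n (Suc j)} then cvec n h j else 0)
     = (\<Sum>j<n. integral {u..v} (\<lambda>x. if x \<in> {gp n j..gp n (Suc j)} then cvec n h j else 0))"
    by (intro integral_sum) (auto simp del: atLeastAtMost_iff intro: piece_int)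
  then show "integral {u..v} (Pd n h) = (\<Sum>j<n. ilen (gp n j) (gp n (Suc j)) u v *\<^sub>R cvec n h j)"
    unfolding Pd_def[abs_def] by (simp only: piece_int)
qed

lemma Pd_bound: "norm (Pd n h x) \<le> (\<Sum>j<n. norm (cvec n h j))"
  unfolding Pd_def
  by (rule order_trans[OF norm_sum]) (intro sum_mono, auto)

lemma Pd_L2: "L2_01 (Pd n h)"
proof -
  define B where "B = (\<Sum>j<n. norm (cvec n h j))"
  have m: "Pd n h \<in> borel_measurable (lebesgue_on {0..1})"
    using Pd_int(1) integrable_imp_measurable by blast
  have a: "Pd n h absolutely_integrable_on {0..1}"
    by (rule measurable_bounded_by_integrable_imp_absolutely_integrable[OF m _ integrable_const_ivl[of B]])
      (auto simp: B_def Pd_bound)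
  have m2: "(\<lambda>x. (norm (Pd n h x))\<^sup>2) \<in> borel_measurable (lebesgue_on {0..1})"
    using m by measurable
  have "(\<lambda>x. (norm (Pd n h x))\<^sup>2) integrable_on {0..1}"
  proof (rule measurable_bounded_by_integrable_imp_integrable[OF m2 integrable_const_ivl[of "B^2"]])
    fix x
    show "norm ((norm (Pd n h x))\<^sup>2) \<le> B^2"
      using Pd_bound[of n h x] by (simp add: B_def power_mono)
  qed auto
  then show ?thesis using a unfolding L2_01_def by blast
qed

lemma interp_H10: "interp n h \<in> H10"
  by (rule H10_I[OF Pd_L2]) (auto simp: interp_def)

lemma gp_simps: "n \<ge> 1 \<Longrightarrow> gp n 0 = 0" "n \<ge> 1 \<Longrightarrow> gp n n = 1"
  "n \<ge> 1 \<Longrightarrow> gp n (Suc j) - gp n j = 1 / real n"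
  by (auto simp: gp_def field_simps)

lemma gp_mono: "n \<ge> 1 \<Longrightarrow> i \<le> j \<Longrightarrow> gp n i \<le> gp n j"
  by (auto simp: gp_def divide_right_mono)

lemma gp_range: "n \<ge> 1 \<Longrightarrow> j \<le> n \<Longrightarrow> gp n j \<in> {0..1}"
  by (auto simp: gp_def field_simps)

lemma ilen_vals:
  assumes n: "n \<ge> 1" and t: "t \<in> {gp n k..gp n (Suc k)}"
  shows "ilen (gp n j) (gp n (Suc j)) 0 t = (if j < k then 1 / real n else if j = k then t - gp n k else 0)"
proof -
  have g0: "0 \<le> gp n j" using n by (simp add: gp_def)
  consider "j < k" | "j = k" | "k < j" by linarith
  then show ?thesis
  proof cases
    case 1
    then have "gp n (Suc j) \<le> gp n k" using gp_mono[OF n] by auto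
    then show ?thesis using 1 t g0 gp_simps(3)[OF n, of j] gp_mono[OF n, of j "Suc j"] by (auto simp: ilen_def)
  next
    case 2
    then show ?thesis using t g0 by (auto simp: ilen_def)
  next
    case 3
    then have "gp n (Suc k) \<le> gp n j" using gp_mono[OF n] by auto
    then show ?thesis using 3 t g0 by (auto simp: ilen_def)
  qed
qed

lemma H10_zero: "h \<in> H10 \<Longrightarrow> h 0 = 0"
  using H10_rep[of h] by auto

lemma interp_on:
  fixes h :: "real \<Rightarrow> 'a::euclidean_space"
  assumes n: "n \<ge> 1" and h: "h \<in> H10" and k: "k < n" and t: "t \<in> {gp n k..gp n (Suc k)}"
  shows "interp n h t = h (gp n k) + (t - gp n k) *\<^sub>R cvec n h k"
proof -
  have t01: "t \<in> {0..1}" using t gp_range[OF n, of k] gp_range[OF n, of "Suc k"] k by auto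
  have "interp n h t = (\<Sum>j<n. ilen (gp n j) (gp n (Suc j)) 0 t *\<^sub>R cvec n h j)"
    using t01 by (simp add: interp_def Pd_int(2))
  also have "\<dots> = (\<Sum>j<n. (if j \<in> {..<k} then h (gp n (Suc j)) - h (gp n j) else 0)
      + (if j = k then (t - gp n k) *\<^sub>R cvec n h k else 0))"
  proof (rule sum.cong[OF refl])
    fix j assume "j \<in> {..<n}"
    have "(1 / real n) *\<^sub>R cvec n h j = h (gp n (Suc j)) - h (gp n j)"
      using n by (simp add: cvec_def)
    then show "ilen (gp n j) (gp n (Suc j)) 0 t *\<^sub>R cvec n h j = (if j \<in> {..<k} then h (gp n (Suc j)) - h (gp n j) else 0)
      + (if j = k then (t - gp n k) *\<^sub>R cvec n h k else 0)"
      using ilen_vals[OF n t, of j] by auto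
  qed
  also have "\<dots> = (\<Sum>j\<in>{..<n} \<inter> {..<k}. h (gp n (Suc j)) - h (gp n j)) + (t - gp n k) *\<^sub>R cvec n h k"
    using k by (simp add: sum.distrib sum.inter_restrict)
  also have "{..<n} \<inter> {..<k} = {..<k}" using k by auto
  also have "(\<Sum>j<k. h (gp n (Suc j)) - h (gp n j)) = h (gp n k) - h (gp n 0)"
    by (rule sum_lessThan_telescope)
  finally show ?thesis using gp_simps(1)[OF n] H10_zero[OF h] by simp
qed

lemma interp_grid:
  fixes h :: "real \<Rightarrow> 'a::euclidean_space"
  assumes n: "n \<ge> 1" and h: "h \<in> H10" and k: "k \<le> n"
  shows "interp n h (gp n k) = h (gp n k)"
proof (cases "k < n")
  case True
  then show ?thesis using interp_on[OF n h True, of "gp n k"] gp_mono[OF n, of k "Suc k"] by simp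
next
  case False
  then have kn: "k = n" using k by simp
  have n1: "n - 1 < n" "Suc (n - 1) = n" using n by auto
  have "interp n h (gp n n) = h (gp n (n - 1)) + (gp n n - gp n (n - 1)) *\<^sub>R cvec n h (n - 1)"
    using interp_on[OF n h n1(1), of "gp n n"] n1(2) gp_mono[OF n, of "n - 1" n] by simp
  also have "\<dots> = h (gp n n)"
    using gp_simps(3)[OF n, of "n - 1"] n1(2) n by (simp add: cvec_def)
  finally show ?thesis using kn by simp
qed

lemma Hn_iff: "f \<in> Hn n \<longleftrightarrow> f \<in> H10 \<and> (\<forall>i<n. \<exists>a b. \<forall>t\<in>{gp n i..gp n (Suc i)}. f t = a + t *\<^sub>R b)"
  unfolding Hn_def gp_def by simp

lemma interp_Hn:
  fixes h :: "real \<Rightarrow> 'a::euclidean_space"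
  assumes n: "n \<ge> 1" and h: "h \<in> H10"
  shows "interp n h \<in> Hn n"
  unfolding Hn_iff
proof (intro conjI allI impI interp_H10)
  fix i assume i: "i < n"
  show "\<exists>a b. \<forall>t\<in>{gp n i..gp n (Suc i)}. interp n h t = a + t *\<^sub>R b"
    by (rule exI[of _ "h (gp n i) - gp n i *\<^sub>R cvec n h i"], rule exI[of _ "cvec n h i"])
      (auto simp: interp_on[OF n h i] algebra_simps)
qed

lemma Hn_choice:
  assumes "k \<in> Hn n"
  obtains A B where "\<And>i t. i < n \<Longrightarrow> t \<in> {gp n i..gp n (Suc i)} \<Longrightarrow> k t = A i + t *\<^sub>R B i"
proof -
  have "\<forall>i. \<exists>ab. i < n \<longrightarrow> (\<forall>t\<in>{gp n i..gp n (Suc i)}. k t = fst ab + t *\<^sub>R snd ab)"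
    using assms unfolding Hn_iff by auto
  then obtain ab where "\<And>i. i < n \<longrightarrow> (\<forall>t\<in>{gp n i..gp n (Suc i)}. k t = fst (ab i) + t *\<^sub>R snd (ab i))"
    by metis
  then show ?thesis using that[of "\<lambda>i. fst (ab i)" "\<lambda>i. snd (ab i)"] by blast
qed

lemma inner_formula_gp:
  fixes f k :: "real \<Rightarrow> 'a::euclidean_space"
  assumes n: "n \<ge> 1" and f: "f \<in> H10" and k: "k \<in> H10"
    and aff: "\<And>i t. i < n \<Longrightarrow> t \<in> {gp n i..gp n (Suc i)} \<Longrightarrow> k t = A i + t *\<^sub>R B i"
  shows "H_inner f k = (\<Sum>i<n. (f (gp n (Suc i)) - f (gp n i)) \<bullet> B i)"
  using inner_formula[OF n f k, of A B] aff unfolding gp_def by blast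

lemma proj_orth:
  fixes h :: "real \<Rightarrow> 'a::euclidean_space"
  assumes n: "n \<ge> 1" and h: "h \<in> H10" and k: "k \<in> Hn n"
  shows "H_inner (\<lambda>t. h t - interp n h t) k = 0"
proof -
  obtain A B where aff: "\<And>i t. i < n \<Longrightarrow> t \<in> {gp n i..gp n (Suc i)} \<Longrightarrow> k t = A i + t *\<^sub>R B i"
    using Hn_choice[OF k] by blast
  have kH: "k \<in> H10" using k Hn_iff by blast
  have fH: "(\<lambda>t. h t - interp n h t) \<in> H10" using H10_diff[OF h interp_H10] .
  have z: "h (gp n j) - interp n h (gp n j) = 0" if "j \<le> n" for j
    using interp_grid[OF n h that] by simp
  have "H_inner (\<lambda>t. h t - interp n h t) k = (\<Sum>i<n. ((h (gp n (Suc i)) - interp n h (gp n (Suc i))) - (h (gp n i) - interp n h (gp n i))) \<bullet> B i)"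
    by (rule inner_formula_gp[OF n fH kH aff])
  also have "\<dots> = 0"
  proof (intro sum.neutral ballI)
    fix i assume "i \<in> {..<n}"
    then show "((h (gp n (Suc i)) - interp n h (gp n (Suc i))) - (h (gp n i) - interp n h (gp n i))) \<bullet> B i = 0"
      using z[of i] z[of "Suc i"] by simp
  qed
  finally show ?thesis .
qed

lemma proj_unique:
  fixes h :: "real \<Rightarrow> 'a::euclidean_space"
  assumes n: "n \<ge> 1" and h: "h \<in> H10" and p': "p' \<in> Hn n"
    and orth: "\<forall>k\<in>Hn n. H_inner (\<lambda>t. h t - p' t) k = 0"
  shows "p' = interp n h"
proof -
  define d where "d = (\<lambda>t. interp n h t - p' t)"
  have p'H: "p' \<in> H10" using p' Hn_iff by blast
  obtain A1 B1 where a1: "\<And>i t. i < n \<Longrightarrow> t \<in> {gp n i..gp n (Suc i)} \<Longrightarrow> interp n h t = A1 i + t *\<^sub>R B1 i"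
    using Hn_choice[OF interp_Hn[OF n h]] by blast
  obtain A2 B2 where a2: "\<And>i t. i < n \<Longrightarrow> t \<in> {gp n i..gp n (Suc i)} \<Longrightarrow> p' t = A2 i + t *\<^sub>R B2 i"
    using Hn_choice[OF p'] by blast
  define A where "A = (\<lambda>i. A1 i - A2 i)"
  define B where "B = (\<lambda>i. B1 i - B2 i)"
  have affd: "d t = A i + t *\<^sub>R B i" if "i < n" "t \<in> {gp n i..gp n (Suc i)}" for i t
    using a1[OF that] a2[OF that] by (simp add: d_def A_def B_def algebra_simps)
  have dH: "d \<in> H10" unfolding d_def using H10_diff[OF interp_H10 p'H] .
  have dHn: "d \<in> Hn n" unfolding Hn_iff using dH affd by blast
  have fH: "(\<lambda>t. h t - p' t) \<in> H10" using H10_diff[OF h p'H] .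
  have hd: "h (gp n j) - p' (gp n j) = d (gp n j)" if "j \<le> n" for j
    using interp_grid[OF n h that] by (simp add: d_def)
  have gpi: "gp n i \<in> {gp n i..gp n (Suc i)}" "gp n (Suc i) \<in> {gp n i..gp n (Suc i)}" for i
    using gp_mono[OF n, of i "Suc i"] by auto
  have dd: "d (gp n (Suc i)) - d (gp n i) = (1 / real n) *\<^sub>R B i" if "i < n" for i
    using affd[OF that gpi(1)] affd[OF that gpi(2)] gp_simps(3)[OF n, of i]
    by (simp add: algebra_simps scaleR_diff_left[symmetric])
  have "0 = H_inner (\<lambda>t. h t - p' t) d" using orth dHn by auto
  also have "\<dots> = (\<Sum>i<n. ((h (gp n (Suc i)) - p' (gp n (Suc i))) - (h (gp n i) - p' (gp n i))) \<bullet> B i)"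
    by (rule inner_formula_gp[OF n fH dH affd])
  also have "\<dots> = (\<Sum>i<n. (1 / real n) * (B i \<bullet> B i))"
    by (rule sum.cong[OF refl]) (auto simp: hd dd)
  finally have "(\<Sum>i<n. (1 / real n) * (B i \<bullet> B i)) = 0" by simp
  then have "\<forall>i\<in>{..<n}. (1 / real n) * (B i \<bullet> B i) = 0"
    by (subst sum_nonneg_eq_0_iff[symmetric]) auto
  then have B0: "B i = 0" if "i < n" for i using that n by auto
  have dgrid: "d (gp n j) = 0" if "j \<le> n" for j
    using that
  proof (induction j)
    case 0
    then show ?case using H10_zero[OF dH] gp_simps(1)[OF n] by simp
  next
    case (Suc j)
    then have j: "j < n" by simp
    have "d (gp n (Suc j)) = d (gp n j)" using dd[OF j] B0[OF j] by simp
    then show ?case using Suc by simp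
  qed
  have "d t = 0" for t
  proof (cases "t \<in> {0..1}")
    case True
    then obtain i where i: "i < n" "t \<in> {gp n i..gp n (Suc i)}"
      using grid_cover[OF n] unfolding gp_def by blast
    have "d t = A i" using affd[OF i] B0[OF i(1)] by simp
    also have "\<dots> = d (gp n i)" using affd[OF i(1) gpi(1)] B0[OF i(1)] by simp
    finally show ?thesis using dgrid i by simp
  next
    case False
    then show ?thesis using H10_out[OF dH] by simp
  qed
  then show ?thesis unfolding d_def by (auto simp: fun_eq_iff)
qed

lemma H_proj_eq:
  fixes h :: "real \<Rightarrow> 'a::euclidean_space"
  assumes n: "n \<ge> 1" and h: "h \<in> H10"
  shows "H_proj (Hn n) h = interp n h"
  unfolding H_proj_def
proof (rule the_equality)
  show "interp n h \<in> Hn n \<and> (\<forall>k\<in>Hn n. H_inner (\<lambda>t. h t - interp n h t) k = 0)"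
    using interp_Hn[OF n h] proj_orth[OF n h] by blast
  fix p assume "p \<in> Hn n \<and> (\<forall>k\<in>Hn n. H_inner (\<lambda>t. h t - p t) k = 0)"
  then show "p = interp n h" using proj_unique[OF n h] by blast
qed

definition Qd :: "nat \<Rightarrow> (real \<Rightarrow> 'a::euclidean_space) \<Rightarrow> real \<Rightarrow> real" where
  "Qd n h x = (\<Sum>j<n. if x \<in> {gp n j..gp n (Suc j)} then norm (cvec n h j) else 0)"

definition phi :: "nat \<Rightarrow> (real \<Rightarrow> 'a::euclidean_space) \<Rightarrow> real \<Rightarrow> real" where
  "phi n h x = norm (H_deriv h x) + Qd n h x"

definition mm :: "nat \<Rightarrow> (real \<Rightarrow> 'a::euclidean_space) \<Rightarrow> nat \<Rightarrow> real" where
  "mm n h j = integral {gp n j..gp n (Suc j)} (phi n h)"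

definition om :: "real \<Rightarrow> nat \<Rightarrow> (real \<Rightarrow> 'a::euclidean_space) \<Rightarrow> real \<Rightarrow> real" where
  "om q n h x = (\<Sum>j<n. if x \<in> {gp n j..gp n (Suc j)} then mm n h j powr (q - 1) else 0)"

lemma Qd_int:
  "Qd n h integrable_on {u..v}"
  "integral {u..v} (Qd n h) = (\<Sum>j<n. ilen (gp n j) (gp n (Suc j)) u v * norm (cvec n h j))"
proof -
  have "(\<lambda>x. \<Sum>j<n. if x \<in> {gp n j..gp n (Suc j)} then norm (cvec n h j) else 0) integrable_on {u..v}"
    by (intro integrable_sum) (auto simp del: atLeastAtMost_iff intro: piece_int)
  then show "Qd n h integrable_on {u..v}" unfolding Qd_def[abs_def] .
  have "integral {u..v} (\<lambda>x. \<Sum>j<n. if x \<in> {gp n j..gp n (Suc j)} then norm (cvec n h j) else 0)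
     = (\<Sum>j<n. integral {u..v} (\<lambda>x. if x \<in> {gp n j..gp n (Suc j)} then norm (cvec n h j) else 0))"
    by (intro integral_sum) (auto simp del: atLeastAtMost_iff intro: piece_int)
  then show "integral {u..v} (Qd n h) = (\<Sum>j<n. ilen (gp n j) (gp n (Suc j)) u v * norm (cvec n h j))"
    unfolding Qd_def[abs_def] by (simp only: piece_int real_scaleR_def)
qed

lemma Qd_nonneg: "Qd n h x \<ge> 0"
  unfolding Qd_def by (intro sum_nonneg) auto

lemma phi_nonneg: "phi n h x \<ge> 0"
  unfolding phi_def using Qd_nonneg[of n h x] by simp

lemma phi_int:
  assumes h: "h \<in> H10" and uv: "0 \<le> u" "v \<le> 1"
  shows "phi n h integrable_on {u..v}"
proof -
  have "(\<lambda>x. norm (H_deriv h x)) integrable_on {u..v}"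
    using L2_int(3)[OF conjunct1[OF H10_rep[OF h]] uv] .
  then show ?thesis unfolding phi_def[abs_def] using Qd_int(1) by (intro integrable_add) auto
qed

lemma e_bound:
  fixes h :: "real \<Rightarrow> 'a::euclidean_space"
  assumes n: "n \<ge> 1" and h: "h \<in> H10" and st: "0 \<le> s" "s \<le> t" "t \<le> 1"
  shows "norm ((h t - interp n h t) - (h s - interp n h s)) \<le> integral {s..t} (phi n h)"
proof -
  define F where "F = H_deriv h"
  have Fr: "L2_01 F" "\<forall>t\<in>{0..1}. h t = integral {0..t} F" using H10_rep[OF h] F_def by auto
  have Pr: "\<forall>t\<in>{0..1}. interp n h t = integral {0..t} (Pd n h)" by (simp add: interp_def)
  have Fi: "F integrable_on {s..t}" using L2_int(1)[OF Fr(1)] st by auto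
  have "(h t - interp n h t) - (h s - interp n h s) = (h t - h s) - (interp n h t - interp n h s)"
    by (simp add: algebra_simps)
  also have "\<dots> = integral {s..t} F - integral {s..t} (Pd n h)"
    using rep_diff[OF Fr st] rep_diff[OF Pd_L2 Pr st] by simp
  also have "\<dots> = integral {s..t} (\<lambda>x. F x - Pd n h x)"
    using integral_diff[OF Fi Pd_int(1)] by simp
  finally have eq: "(h t - interp n h t) - (h s - interp n h s) = integral {s..t} (\<lambda>x. F x - Pd n h x)" .
  have "norm (integral {s..t} (\<lambda>x. F x - Pd n h x)) \<le> integral {s..t} (phi n h)"
  proof (rule integral_norm_bound_integral)
    show "(\<lambda>x. F x - Pd n h x) integrable_on {s..t}" using Fi Pd_int(1) by (intro integrable_diff) auto
    show "phi n h integrable_on {s..t}" using phi_int[OF h] st by auto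
    fix x
    have "norm (F x - Pd n h x) \<le> norm (F x) + norm (Pd n h x)" by (rule norm_triangle_ineq4)
    also have "norm (Pd n h x) \<le> Qd n h x"
      unfolding Pd_def Qd_def by (rule order_trans[OF norm_sum]) (intro sum_mono, auto)
    finally show "norm (F x - Pd n h x) \<le> phi n h x" by (simp add: phi_def F_def)
  qed
  then show ?thesis using eq by simp
qed

lemma ilen_same:
  assumes n: "n \<ge> 1"
  shows "ilen (gp n i) (gp n (Suc i)) (gp n j) (gp n (Suc j)) = (if i = j then 1 / real n else 0)"
proof -
  consider "i < j" | "i = j" | "j < i" by linarith
  then show ?thesis
  proof cases
    case 1
    then have "gp n (Suc i) \<le> gp n j" using gp_mono[OF n] by auto
    moreover have "gp n i \<le> gp n (Suc i)" "gp n j \<le> gp n (Suc j)" using gp_mono[OF n] by auto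
    ultimately show ?thesis using 1 by (auto simp: ilen_def)
  next
    case 2
    then show ?thesis using gp_simps(3)[OF n, of i] gp_mono[OF n, of i "Suc i"] by (auto simp: ilen_def)
  next
    case 3
    then have "gp n (Suc j) \<le> gp n i" using gp_mono[OF n] by auto
    moreover have "gp n i \<le> gp n (Suc i)" "gp n j \<le> gp n (Suc j)" using gp_mono[OF n] by auto
    ultimately show ?thesis using 3 by (auto simp: ilen_def)
  qed
qed

lemma mm_bound:
  fixes h :: "real \<Rightarrow> 'a::euclidean_space"
  assumes n: "n \<ge> 1" and h: "h \<in> H10" and j: "j < n"
  shows "mm n h j \<le> 2 * integral {gp n j..gp n (Suc j)} (\<lambda>x. norm (H_deriv h x))"
proof -
  define F where "F = H_deriv h"
  have Fr: "L2_01 F" "\<forall>t\<in>{0..1}. h t = integral {0..t} F" using H10_rep[OF h] F_def by auto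
  have g: "0 \<le> gp n j" "gp n j \<le> gp n (Suc j)" "gp n (Suc j) \<le> 1"
    using gp_range[OF n, of j] gp_range[OF n, of "Suc j"] gp_mono[OF n, of j "Suc j"] j by auto
  have nF: "(\<lambda>x. norm (F x)) integrable_on {gp n j..gp n (Suc j)}" using L2_int(3)[OF Fr(1)] g by auto
  have "mm n h j = integral {gp n j..gp n (Suc j)} (\<lambda>x. norm (F x)) + integral {gp n j..gp n (Suc j)} (Qd n h)"
    unfolding mm_def phi_def[abs_def] using integral_add[OF nF Qd_int(1)] by (simp add: F_def)
  also have "integral {gp n j..gp n (Suc j)} (Qd n h) = norm (cvec n h j) / real n"
  proof -
    have "(\<Sum>i<n. (if i = j then 1 / real n else 0) * norm (cvec n h i))
        = (\<Sum>i<n. if i = j then norm (cvec n h i) / real n else 0)"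
      by (rule sum.cong) auto
    then show ?thesis unfolding Qd_int(2) ilen_same[OF n] using j by (simp add: sum.delta)
  qed
  also have "norm (cvec n h j) / real n = norm (integral {gp n j..gp n (Suc j)} F)"
    using rep_diff[OF Fr g] n by (simp add: cvec_def)
  also have "\<dots> \<le> integral {gp n j..gp n (Suc j)} (\<lambda>x. norm (F x))"
    using L2_int(1)[OF Fr(1)] g nF by (intro integral_norm_bound_integral) auto
  finally show ?thesis by (simp add: F_def)
qed

lemma mm_nonneg:
  assumes n: "n \<ge> 1" and h: "h \<in> H10" and j: "j < n"
  shows "mm n h j \<ge> 0"
proof -
  have "gp n j \<ge> 0" "gp n (Suc j) \<le> 1" using gp_range[OF n, of j] gp_range[OF n, of "Suc j"] j by auto
  then show ?thesis unfolding mm_def using phi_int[OF h] phi_nonneg by (intro integral_nonneg) auto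
qed

lemma om_nonneg: "om q n h x \<ge> 0"
  unfolding om_def by (intro sum_nonneg) auto

lemma om_ge:
  assumes "j < n" "x \<in> {gp n j..gp n (Suc j)}"
  shows "mm n h j powr (q - 1) \<le> om q n h x"
proof -
  have "(\<Sum>i\<in>{j}. if x \<in> {gp n i..gp n (Suc i)} then mm n h i powr (q - 1) else 0)
     \<le> (\<Sum>i<n. if x \<in> {gp n i..gp n (Suc i)} then mm n h i powr (q - 1) else 0)"
    using assms(1) by (intro sum_mono2) auto
  then show ?thesis using assms(2) by (simp add: om_def)
qed

lemma phiom_int:
  assumes h: "h \<in> H10" and uv: "0 \<le> u" "v \<le> 1"
  shows "(\<lambda>x. phi n h x * om q n h x) integrable_on {u..v}"
    "integral {u..v} (\<lambda>x. phi n h x * om q n h x) =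
       (\<Sum>j<n. mm n h j powr (q - 1) * integral ({gp n j..gp n (Suc j)} \<inter> {u..v}) (phi n h))"
proof -
  have eq: "(\<lambda>x. phi n h x * om q n h x) = (\<lambda>x. \<Sum>j<n. mm n h j powr (q - 1) *\<^sub>R
     (if x \<in> {gp n j..gp n (Suc j)} then phi n h x else 0))"
    by (auto simp: om_def sum_distrib_left intro!: sum.cong)
  have pi: "(\<lambda>x. if x \<in> {gp n j..gp n (Suc j)} then phi n h x else 0) integrable_on {u..v}" for j
  proof -
    have "{gp n j..gp n (Suc j)} \<inter> {u..v} = {max (gp n j) u..min (gp n (Suc j)) v}" by auto
    moreover have "phi n h integrable_on {max (gp n j) u..min (gp n (Suc j)) v}"
      using phi_int[OF h] uv by auto
    ultimately show ?thesis using integrable_restrict_Int by metis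
  qed
  show "(\<lambda>x. phi n h x * om q n h x) integrable_on {u..v}"
    unfolding eq by (intro integrable_sum finite_lessThan integrable_cmul pi)
  have "integral {u..v} (\<lambda>x. phi n h x * om q n h x) = (\<Sum>j<n. mm n h j powr (q - 1) *\<^sub>R
     integral {u..v} (\<lambda>x. if x \<in> {gp n j..gp n (Suc j)} then phi n h x else 0))"
    unfolding eq by (subst integral_sum) (auto simp del: atLeastAtMost_iff real_scaleR_def intro: pi integrable_cmul)
  also have "\<dots> = (\<Sum>j<n. mm n h j powr (q - 1) * integral ({gp n j..gp n (Suc j)} \<inter> {u..v}) (phi n h))"
    by (simp only: integral_restrict_Int real_scaleR_def)
  finally show "integral {u..v} (\<lambda>x. phi n h x * om q n h x) =
       (\<Sum>j<n. mm n h j powr (q - 1) * integral ({gp n j..gp n (Suc j)} \<inter> {u..v}) (phi n h))" .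
qed

lemma powr_q_split: "(a::real) \<ge> 0 \<Longrightarrow> q > 1 \<Longrightarrow> a powr q = a * a powr (q - 1)"
  using powr_add[of a 1 "q - 1"] by (cases "a = 0") auto

lemma phiom_total:
  assumes n: "n \<ge> 1" and h: "h \<in> H10" and q: "q > 1"
  shows "integral {0..1} (\<lambda>x. phi n h x * om q n h x) = (\<Sum>j<n. mm n h j powr q)"
proof -
  have "integral {0..1} (\<lambda>x. phi n h x * om q n h x) =
       (\<Sum>j<n. mm n h j powr (q - 1) * integral ({gp n j..gp n (Suc j)} \<inter> {0..1}) (phi n h))"
    by (rule phiom_int(2)[OF h]) auto
  also have "\<dots> = (\<Sum>j<n. mm n h j powr q)"
  proof (rule sum.cong[OF refl])
    fix j assume "j \<in> {..<n}"
    then have "{gp n j..gp n (Suc j)} \<inter> {0..1} = {gp n j..gp n (Suc j)}"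
      using gp_range[OF n, of j] gp_range[OF n, of "Suc j"] by auto
    then have e: "integral ({gp n j..gp n (Suc j)} \<inter> {0..1}) (phi n h) = mm n h j"
      by (simp only: mm_def)
    show "mm n h j powr (q - 1) * integral ({gp n j..gp n (Suc j)} \<inter> {0..1}) (phi n h) = mm n h j powr q"
      unfolding e using powr_q_split[OF mm_nonneg[OF n h] q] \<open>j \<in> {..<n}\<close> by (simp add: mult.commute)
  qed
  finally show ?thesis .
qed

lemma up_props:
  assumes n: "n \<ge> 1" and s: "s \<in> {0..1::real}"
  defines "k \<equiv> nat \<lceil>s * real n\<rceil>" and "i \<equiv> min (nat \<lfloor>s * real n\<rfloor>) (n - 1)"
  shows "k \<le> n" "s \<le> gp n k" "i < n" "gp n i \<le> s" "gp n k \<le> gp n (Suc i)"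
proof -
  have np: "real n > 0" using n by simp
  have sn: "0 \<le> s * n" "s * n \<le> n" using s np by (auto simp: mult_le_cancel_right1)
  have c1: "real_of_int \<lceil>s * real n\<rceil> \<ge> s * n" "real_of_int \<lceil>s * real n\<rceil> < s * n + 1" by linarith+
  have f1: "real_of_int \<lfloor>s * real n\<rfloor> \<le> s * n" "real_of_int \<lfloor>s * real n\<rfloor> > s * n - 1" by linarith+
  have c0: "\<lceil>s * real n\<rceil> \<ge> 0" "\<lfloor>s * real n\<rfloor> \<ge> 0" using sn by auto
  have ck: "real k = real_of_int \<lceil>s * real n\<rceil>" unfolding k_def using c0 by simp
  have "\<lceil>s * real n\<rceil> \<le> int n" using sn(2) ceiling_le_iff[of "s * real n" "int n"] by simp
  then show "k \<le> n" unfolding k_def using nat_le_iff by blast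
  show "s \<le> gp n k" unfolding gp_def using ck c1 np by (simp add: field_simps)
  show "i < n" unfolding i_def using n by simp
  have fr: "real (nat \<lfloor>s * real n\<rfloor>) \<le> s * n" using f1 c0 by simp
  have "real i \<le> s * n"
  proof (cases "nat \<lfloor>s * real n\<rfloor> \<le> n - 1")
    case True
    then have "i = nat \<lfloor>s * real n\<rfloor>" unfolding i_def by simp
    then show ?thesis using fr by simp
  next
    case False
    then have "i = n - 1" "i \<le> nat \<lfloor>s * real n\<rfloor>" unfolding i_def by auto
    then have "real i \<le> real (nat \<lfloor>s * real n\<rfloor>)" by (simp only: of_nat_le_iff)
    then show ?thesis using fr by linarith
  qed
  then show "gp n i \<le> s" unfolding gp_def using np by (simp add: field_simps)
  have "k \<le> Suc i"
  proof (cases "nat \<lfloor>s * real n\<rfloor> \<le> n - 1")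
    case True
    then have ii: "i = nat \<lfloor>s * real n\<rfloor>" unfolding i_def by simp
    have "\<lceil>s * real n\<rceil> \<le> \<lfloor>s * real n\<rfloor> + 1" using c1 f1 by linarith
    then have "k \<le> nat (\<lfloor>s * real n\<rfloor> + 1)" unfolding k_def by (rule nat_mono)
    also have "nat (\<lfloor>s * real n\<rfloor> + 1) = Suc i" unfolding ii using c0(2) by (simp add: nat_add_distrib)
    finally show ?thesis .
  next
    case False
    then have "i = n - 1" unfolding i_def by simp
    then show ?thesis using \<open>k \<le> n\<close> by simp
  qed
  then show "gp n k \<le> gp n (Suc i)" using gp_mono[OF n] by blast
qed

lemma dn_props:
  assumes n: "n \<ge> 1" and u: "u \<in> {0..1::real}"
  defines "k \<equiv> nat \<lfloor>u * real n\<rfloor>" and "j \<equiv> nat \<lceil>u * real n\<rceil> - 1"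
  shows "k \<le> n" "gp n k \<le> u" "j < n" "gp n j \<le> gp n k" "u \<le> gp n (Suc j)"
proof -
  have np: "real n > 0" using n by simp
  have un: "0 \<le> u * n" "u * n \<le> n" using u np by (auto simp: mult_le_cancel_right1)
  have c1: "real_of_int \<lceil>u * real n\<rceil> \<ge> u * n" "real_of_int \<lceil>u * real n\<rceil> < u * n + 1" by linarith+
  have f1: "real_of_int \<lfloor>u * real n\<rfloor> \<le> u * n" "real_of_int \<lfloor>u * real n\<rfloor> > u * n - 1" by linarith+
  have c0: "\<lceil>u * real n\<rceil> \<ge> 0" "\<lfloor>u * real n\<rfloor> \<ge> 0" using un by auto
  have cn: "\<lceil>u * real n\<rceil> \<le> int n" using un(2) ceiling_le_iff[of "u * real n" "int n"] by simp
  have fk: "real k = real_of_int \<lfloor>u * real n\<rfloor>" unfolding k_def using c0 by simp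
  show "k \<le> n" unfolding k_def using cn f1 c1 by linarith
  show "gp n k \<le> u" unfolding gp_def using fk f1 np by (simp add: field_simps)
  show "j < n" unfolding j_def using cn n by linarith
  have "j \<le> k" unfolding j_def k_def using c1 f1 c0 by linarith
  then show "gp n j \<le> gp n k" using gp_mono[OF n] by blast
  have "u * n \<le> real (Suc j)"
  proof (cases "u = 0")
    case True then show ?thesis by simp
  next
    case False
    then have "u * n > 0" using u np by simp
    then have "\<lceil>u * real n\<rceil> \<ge> 1" by (simp only: one_le_ceiling)
    then have "real (Suc j) = real_of_int \<lceil>u * real n\<rceil>" unfolding j_def by (simp add: of_nat_diff)
    then show ?thesis using c1 by simp
  qed
  then show "u \<le> gp n (Suc j)" unfolding gp_def using np by (simp add: field_simps)
qed

lemma crossing: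
  assumes n: "n \<ge> 1" and "gp n (nat \<lceil>s * real n\<rceil>) < u" and s: "s \<ge> 0"
  shows "gp n (nat \<lceil>s * real n\<rceil>) \<le> gp n (nat \<lfloor>u * real n\<rfloor>)"
proof -
  have np: "real n > 0" using n by simp
  have "real (nat \<lceil>s * real n\<rceil>) < u * n" using assms(2) np unfolding gp_def by (simp add: field_simps)
  moreover have "0 \<le> s * real n" using s by simp
  then have c0: "\<lceil>s * real n\<rceil> \<ge> 0" by (simp only: zero_le_ceiling)
  then have "real (nat \<lceil>s * real n\<rceil>) = real_of_int \<lceil>s * real n\<rceil>" by (simp only: of_nat_nat)
  ultimately have "real_of_int \<lceil>s * real n\<rceil> \<le> u * n" by linarith
  then have "\<lceil>s * real n\<rceil> \<le> \<lfloor>u * real n\<rfloor>" by (simp add: le_floor_iff)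
  then have "nat \<lceil>s * real n\<rceil> \<le> nat \<lfloor>u * real n\<rfloor>" by (rule nat_mono)
  then show ?thesis using gp_mono[OF n] by blast
qed

lemma powr_piece:
  fixes h :: "real \<Rightarrow> 'a::euclidean_space"
  assumes n: "n \<ge> 1" and h: "h \<in> H10" and q: "q > 1" and j: "j < n"
    and xy: "gp n j \<le> x" "x \<le> y" "y \<le> gp n (Suc j)"
  shows "(integral {x..y} (phi n h)) powr q \<le> integral {x..y} (\<lambda>z. phi n h z * om q n h z)"
proof -
  have g: "0 \<le> gp n j" "gp n (Suc j) \<le> 1" using gp_range[OF n, of j] gp_range[OF n, of "Suc j"] j by auto
  define A where "A = integral {x..y} (phi n h)"
  have pi: "phi n h integrable_on {x..y}" using phi_int[OF h] g xy by auto
  have A0: "A \<ge> 0" unfolding A_def using pi phi_nonneg by (intro integral_nonneg) auto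
  have Am: "A \<le> mm n h j" unfolding A_def mm_def
    using xy g phi_int[OF h] phi_nonneg by (intro integral_subset_le) auto
  have Ap: "A powr (q - 1) \<le> mm n h j powr (q - 1)" using A0 Am q by (intro powr_mono2) auto
  have "A powr q = A * A powr (q - 1)" using powr_q_split[OF A0 q] .
  also have "\<dots> = integral {x..y} (\<lambda>z. phi n h z * A powr (q - 1))"
    unfolding A_def using integral_mult[OF pi, of "A powr (q - 1)"] by (simp add: mult.commute)
  also have "\<dots> \<le> integral {x..y} (\<lambda>z. phi n h z * om q n h z)"
  proof (rule integral_le)
    show "(\<lambda>z. phi n h z * A powr (q - 1)) integrable_on {x..y}" using integrable_on_cmult_right[OF pi, of "A powr (q - 1)"] by simp
    show "(\<lambda>z. phi n h z * om q n h z) integrable_on {x..y}" using phiom_int(1)[OF h] g xy by auto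
    fix z assume "z \<in> {x..y}"
    then have zI: "z \<in> {gp n j..gp n (Suc j)}" using xy by auto
    have "A powr (q - 1) \<le> om q n h z" using Ap om_ge[OF j zI, where h=h and q=q] by linarith
    then show "phi n h z * A powr (q - 1) \<le> phi n h z * om q n h z"
      using phi_nonneg by (intro mult_left_mono) auto
  qed
  finally show ?thesis unfolding A_def .
qed

lemma powr_sum_le:
  assumes "A \<ge> 0" "B \<ge> 0" "(q::real) > 0"
  shows "(A + B) powr q \<le> 2 powr q * (A powr q + B powr q)"
proof -
  have "(A + B) powr q \<le> (2 * max A B) powr q" using assms by (intro powr_mono2) auto
  also have "\<dots> = 2 powr q * max A B powr q" using assms by (simp add: powr_mult)
  also have "max A B powr q \<le> A powr q + B powr q" by (simp add: max_def)
  finally show ?thesis by simp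
qed

lemma e_grid:
  fixes h :: "real \<Rightarrow> 'a::euclidean_space"
  assumes n: "n \<ge> 1" and h: "h \<in> H10" and k: "k \<le> n"
  shows "h (gp n k) - interp n h (gp n k) = 0"
  using interp_grid[OF n h k] by simp

lemma piece_bound:
  fixes h :: "real \<Rightarrow> 'a::euclidean_space"
  assumes n: "n \<ge> 1" and h: "h \<in> H10" and q: "q > 1" and su: "0 \<le> s" "s \<le> u" "u \<le> 1"
  shows "norm ((h u - interp n h u) - (h s - interp n h s)) powr q
    \<le> 2 powr q * (2 * integral {s..u} (\<lambda>z. phi n h z * om q n h z))"
proof -
  define e where "e = (\<lambda>t. h t - interp n h t)"
  define ks where "ks = nat \<lceil>s * real n\<rceil>"
  define iS where "iS = min (nat \<lfloor>s * real n\<rfloor>) (n - 1)"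
  define ku where "ku = nat \<lfloor>u * real n\<rfloor>"
  define ju where "ju = nat \<lceil>u * real n\<rceil> - 1"
  define a where "a = gp n ks"
  define b where "b = gp n ku"
  have s01: "s \<in> {0..1}" and u01: "u \<in> {0..1}" using su by auto
  note U = up_props[OF n s01, folded ks_def iS_def]
  note D = dn_props[OF n u01, folded ku_def ju_def]
  have a1: "a \<le> 1" using gp_range[OF n U(1)] a_def by auto
  have b0: "0 \<le> b" using gp_range[OF n D(1)] b_def by auto
  have sa: "s \<le> a" using U(2) a_def by simp
  have bu: "b \<le> u" using D(2) b_def by simp
  define A where "A = integral {s..min u a} (phi n h)"
  define B where "B = integral {max s b..u} (phi n h)"
  have A0: "A \<ge> 0" unfolding A_def using phi_int[OF h] phi_nonneg su a1
    by (intro integral_nonneg) auto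
  have B0: "B \<ge> 0" unfolding B_def using phi_int[OF h] phi_nonneg su b0
    by (intro integral_nonneg) auto
  have C1: "norm (e u - e s) \<le> A + B"
  proof (cases "u \<le> a")
    case True
    then have "min u a = u" by simp
    then have "norm (e u - e s) \<le> A" unfolding A_def e_def using e_bound[OF n h su] by simp
    then show ?thesis using B0 by simp
  next
    case False
    then have ab: "a \<le> b" using crossing[OF n _ su(1)] a_def b_def ks_def ku_def by simp
    then have mm: "min u a = a" "max s b = b" using False sa by auto
    have ea: "e a = 0" unfolding e_def a_def using e_grid[OF n h U(1)] .
    have eb: "e b = 0" unfolding e_def b_def using e_grid[OF n h D(1)] .
    have "e u - e s = (e u - e b) + (e a - e s)" using ea eb by simp
    then have "norm (e u - e s) \<le> norm (e u - e b) + norm (e a - e s)"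
      by (metis norm_triangle_ineq)
    also have "norm (e u - e b) \<le> B" unfolding B_def mm e_def using e_bound[OF n h b0 bu su(3)] .
    also have "norm (e a - e s) \<le> A" unfolding A_def mm e_def using e_bound[OF n h su(1) sa a1] .
    finally show ?thesis by simp
  qed
  have C2A: "A powr q \<le> integral {s..min u a} (\<lambda>z. phi n h z * om q n h z)"
    unfolding A_def using U(3,4,5) su sa a_def by (intro powr_piece[OF n h q U(3)]) auto
  have C2B: "B powr q \<le> integral {max s b..u} (\<lambda>z. phi n h z * om q n h z)"
    unfolding B_def using D(3,4,5) su bu b_def by (intro powr_piece[OF n h q D(3)]) auto
  have po: "\<And>x y. 0 \<le> x \<Longrightarrow> y \<le> 1 \<Longrightarrow> (\<lambda>z. phi n h z * om q n h z) integrable_on {x..y}"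
    using phiom_int(1)[OF h] by blast
  have pnn: "\<And>z. 0 \<le> phi n h z * om q n h z" by (intro mult_nonneg_nonneg phi_nonneg om_nonneg)
  have C3A: "integral {s..min u a} (\<lambda>z. phi n h z * om q n h z) \<le> integral {s..u} (\<lambda>z. phi n h z * om q n h z)"
    using su a1 by (intro integral_subset_le po) (use pnn in auto)
  have C3B: "integral {max s b..u} (\<lambda>z. phi n h z * om q n h z) \<le> integral {s..u} (\<lambda>z. phi n h z * om q n h z)"
    using su b0 by (intro integral_subset_le po) (use pnn in auto)
  have "norm (e u - e s) powr q \<le> (A + B) powr q" using C1 q by (intro powr_mono2) auto
  also have "\<dots> \<le> 2 powr q * (A powr q + B powr q)" using A0 B0 q by (intro powr_sum_le) auto
  also have "\<dots> \<le> 2 powr q * (2 * integral {s..u} (\<lambda>z. phi n h z * om q n h z))"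
    using C2A C2B C3A C3B by (intro mult_left_mono) auto
  finally show ?thesis unfolding e_def .
qed

lemma seg_mono:
  assumes "\<And>i. i < m \<Longrightarrow> t i \<le> (t (Suc i) :: real)" "i \<le> j" "j \<le> m"
  shows "t i \<le> t j"
  using assms(2,3)
proof (induction j)
  case 0 then show ?case by simp
next
  case (Suc j)
  show ?case
  proof (cases "i = Suc j")
    case True then show ?thesis by simp
  next
    case False
    then have "t i \<le> t j" using Suc by auto
    also have "t j \<le> t (Suc j)" using assms(1) Suc by auto
    finally show ?thesis .
  qed
qed

lemma partition_bound:
  fixes h :: "real \<Rightarrow> 'a::euclidean_space"
  assumes n: "n \<ge> 1" and h: "h \<in> H10" and q: "q > 1"
    and t0: "t 0 = 0" and tm: "t m = 1" and mono: "\<And>i. i < m \<Longrightarrow> t i \<le> t (Suc i)"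
  shows "(\<Sum>i<m. norm ((h (t (Suc i)) - interp n h (t (Suc i))) - (h (t i) - interp n h (t i))) powr q)
    \<le> 2 powr q * 2 * (\<Sum>j<n. mm n h j powr q)"
proof -
  have tr: "t i \<in> {0..1}" if "i \<le> m" for i
    using seg_mono[where t=t and m=m and i=0 and j=i, OF mono] seg_mono[where t=t and m=m and i=i and j=m, OF mono] that t0 tm by auto
  have "(\<Sum>i<m. norm ((h (t (Suc i)) - interp n h (t (Suc i))) - (h (t i) - interp n h (t i))) powr q)
      \<le> (\<Sum>i<m. 2 powr q * (2 * integral {t i..t (Suc i)} (\<lambda>z. phi n h z * om q n h z)))"
  proof (rule sum_mono)
    fix i assume "i \<in> {..<m}"
    then have "t i \<in> {0..1}" "t (Suc i) \<in> {0..1}" "t i \<le> t (Suc i)" using tr mono by auto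
    then show "norm ((h (t (Suc i)) - interp n h (t (Suc i))) - (h (t i) - interp n h (t i))) powr q
      \<le> 2 powr q * (2 * integral {t i..t (Suc i)} (\<lambda>z. phi n h z * om q n h z))"
      using piece_bound[OF n h q] by auto
  qed
  also have "\<dots> = 2 powr q * 2 * (\<Sum>i<m. integral {t i..t (Suc i)} (\<lambda>z. phi n h z * om q n h z))"
    by (simp add: sum_distrib_left mult.assoc)
  also have "(\<Sum>i<m. integral {t i..t (Suc i)} (\<lambda>z. phi n h z * om q n h z)) = integral {t 0..t m} (\<lambda>z. phi n h z * om q n h z)"
  proof -
    have "t 0 \<le> t m \<and> (\<lambda>z. phi n h z * om q n h z) integrable_on {t 0..t m} \<and>
       integral {t 0..t m} (\<lambda>z. phi n h z * om q n h z) = (\<Sum>i<m. integral {t i..t (Suc i)} (\<lambda>z. phi n h z * om q n h z))"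
    proof (rule sum_partition)
      show "\<And>i. i < m \<Longrightarrow> t i \<le> t (Suc i)" by (rule mono)
      fix i assume "i < m"
      then have "t i \<in> {0..1}" "t (Suc i) \<in> {0..1}" using tr by auto
      then show "(\<lambda>z. phi n h z * om q n h z) integrable_on {t i..t (Suc i)}"
        using phiom_int(1)[OF h] by auto
    qed
    then show ?thesis by simp
  qed
  also have "\<dots> = (\<Sum>j<n. mm n h j powr q)" using phiom_total[OF n h q] t0 tm by simp
  finally show ?thesis .
qed

lemma cauchy_schwarz_int:
  fixes g :: "real \<Rightarrow> real"
  assumes ab: "a < b" and gi: "g integrable_on {a..b}" and g2: "(\<lambda>x. (g x)\<^sup>2) integrable_on {a..b}"
  shows "integral {a..b} g \<le> sqrt (b - a) * sqrt (integral {a..b} (\<lambda>x. (g x)\<^sup>2))"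
proof -
  define I where "I = integral {a..b} g"
  define G where "G = integral {a..b} (\<lambda>x. (g x)\<^sup>2)"
  define L where "L = b - a"
  define l where "l = I / L"
  have L0: "L > 0" using ab L_def by simp
  have pt: "2 * l * g x \<le> (g x)\<^sup>2 + l\<^sup>2" for x
  proof -
    have "0 \<le> (g x - l)\<^sup>2" by simp
    then show ?thesis by (simp add: power2_eq_square algebra_simps)
  qed
  have "integral {a..b} (\<lambda>x. 2 * l * g x) \<le> integral {a..b} (\<lambda>x. (g x)\<^sup>2 + l\<^sup>2)"
    using gi g2 pt by (intro integral_le integrable_add integrable_on_cmult_left[of g, simplified]) auto
  moreover have "integral {a..b} (\<lambda>x. (g x)\<^sup>2 + l\<^sup>2) = G + l\<^sup>2 * L"
    using integral_add[OF g2 integrable_const_ivl[of "l\<^sup>2" a b]] ab by (simp add: G_def L_def)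
  moreover have "integral {a..b} (\<lambda>x. 2 * l * g x) = 2 * l * integral {a..b} g"
    using integral_mult[OF gi, of "2 * l"] by simp
  ultimately have "2 * l * I \<le> G + l\<^sup>2 * L" unfolding I_def by simp
  then have "2 * I * I / L \<le> G + I * I / L" unfolding l_def using L0
    by (simp add: power2_eq_square field_simps)
  then have "I * I / L \<le> G" by simp
  then have "I\<^sup>2 \<le> L * G" using L0 by (simp add: power2_eq_square field_simps)
  then have "I \<le> sqrt (L * G)" using real_le_rsqrt by blast
  then show ?thesis unfolding I_def G_def L_def by (simp add: real_sqrt_mult)
qed

lemma power_mean:
  fixes y :: "nat \<Rightarrow> real"
  assumes n: "n \<ge> 1" and y: "\<And>j. y j \<ge> 0" and r: "0 < r" "r < 1"
  shows "(\<Sum>j<n. y j powr r) \<le> real n powr (1 - r) * (\<Sum>j<n. y j) powr r"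
proof (cases "(\<Sum>j<n. y j) = 0")
  case True
  then have "\<forall>j\<in>{..<n}. y j = 0" using y by (subst sum_nonneg_eq_0_iff[symmetric]) auto
  then show ?thesis by simp
next
  case False
  define S where "S = (\<Sum>j<n. y j)"
  have S0: "S > 0" using False y S_def by (simp add: order_less_le sum_nonneg)
  define c where "c = S / real n"
  have c0: "c > 0" using S0 n c_def by simp
  have each: "y j powr r * c powr (1 - r) \<le> r * y j + (1 - r) * c" for j
  proof (cases "y j = 0")
    case True then show ?thesis using r c0 by simp
  next
    case False
    then show ?thesis using Youngs_inequality_0[of r "1 - r" "y j" c] r c0 y[of j] by simp
  qed
  have "(\<Sum>j<n. y j powr r) * c powr (1 - r) = (\<Sum>j<n. y j powr r * c powr (1 - r))"
    by (simp add: sum_distrib_right)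
  also have "\<dots> \<le> (\<Sum>j<n. r * y j + (1 - r) * c)" by (intro sum_mono each)
  also have "\<dots> = r * S + (1 - r) * c * real n" by (simp add: sum.distrib sum_distrib_left S_def)
  also have "\<dots> = S" using n by (simp add: c_def field_simps)
  finally have le: "(\<Sum>j<n. y j powr r) * c powr (1 - r) \<le> S" .
  have cp: "c powr (1 - r) > 0" using c0 by simp
  have "(\<Sum>j<n. y j powr r) \<le> S / c powr (1 - r)" using le cp by (simp add: field_simps)
  also have "S / c powr (1 - r) = real n powr (1 - r) * S powr r"
  proof -
    have e1: "c powr (1 - r) = S powr (1 - r) / real n powr (1 - r)"
      unfolding c_def using S0 n by (simp add: powr_divide)
    have sd: "S = S powr (1 - r) * S powr r" using S0 by (simp add: powr_add[symmetric])
    have p1: "S powr (1 - r) > 0" "real n powr (1 - r) > 0" using S0 n by auto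
    have "S / c powr (1 - r) = S * real n powr (1 - r) / S powr (1 - r)"
      unfolding e1 using p1 by (simp add: field_simps)
    also have "\<dots> = S powr r * real n powr (1 - r)"
      using p1 by (subst (1) sd) (simp add: field_simps)
    finally show ?thesis by (simp add: mult.commute)
  qed
  finally show ?thesis unfolding S_def .
qed

lemma sum_mm_bound:
  fixes h :: "real \<Rightarrow> 'a::euclidean_space"
  assumes n: "n \<ge> 1" and h: "h \<in> H10" and q: "1 < q" "q < 2"
  shows "(\<Sum>j<n. mm n h j powr q) \<le> 2 powr q * real n powr (1 - q) * H_norm h powr q"
proof -
  define F where "F = H_deriv h"
  have Fr: "L2_01 F" using H10_rep[OF h] F_def by auto
  define G where "G = (\<lambda>j. integral {gp n j..gp n (Suc j)} (\<lambda>x. (norm (F x))\<^sup>2))"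
  have np: "real n > 0" using n by simp
  have np1: "1 / real n > 0" using np by simp
  have gl: "gp n j < gp n (Suc j)" for j using gp_simps(3)[OF n, of j] np1 by linarith
  have g: "0 \<le> gp n j" "gp n j < gp n (Suc j)" "gp n (Suc j) \<le> 1" "gp n (Suc j) - gp n j = 1 / real n"
    if "j < n" for j
    using gp_range[OF n, of j] gp_range[OF n, of "Suc j"] that gp_simps(3)[OF n, of j] gl by auto
  have G0: "G j \<ge> 0" if "j < n" for j
    unfolding G_def using L2_int(4)[OF Fr] g[OF that] by (intro integral_nonneg) auto
  have mj: "mm n h j powr q \<le> 2 powr q * (1 / real n) powr (q / 2) * G j powr (q / 2)" if j: "j < n" for j
  proof -
    have "mm n h j \<le> 2 * integral {gp n j..gp n (Suc j)} (\<lambda>x. norm (F x))"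
      using mm_bound[OF n h j] F_def by simp
    also have "integral {gp n j..gp n (Suc j)} (\<lambda>x. norm (F x)) \<le> sqrt (1 / real n) * sqrt (G j)"
      using cauchy_schwarz_int[of "gp n j" "gp n (Suc j)" "\<lambda>x. norm (F x)"] g[OF j] L2_int[OF Fr] G_def
      by auto
    finally have "mm n h j \<le> 2 * (sqrt (1 / real n) * sqrt (G j))" by simp
    then have "mm n h j powr q \<le> (2 * (sqrt (1 / real n) * sqrt (G j))) powr q"
      using mm_nonneg[OF n h j] q by (intro powr_mono2) auto
    also have "\<dots> = 2 powr q * (sqrt (1 / real n) powr q * sqrt (G j) powr q)"
      using G0[OF j] by (simp add: powr_mult)
    also have "sqrt (1 / real n) powr q = (1 / real n) powr (q / 2)"
      using np by (simp add: powr_half_sqrt[symmetric] powr_powr)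
    also have "sqrt (G j) powr q = G j powr (q / 2)"
      using G0[OF j] by (simp add: powr_half_sqrt[symmetric] powr_powr)
    finally show ?thesis by (simp add: mult.assoc)
  qed
  have "(\<Sum>j<n. mm n h j powr q) \<le> (\<Sum>j<n. 2 powr q * (1 / real n) powr (q / 2) * G j powr (q / 2))"
    using mj by (intro sum_mono) auto
  also have "\<dots> = 2 powr q * (1 / real n) powr (q / 2) * (\<Sum>j<n. G j powr (q / 2))"
    by (simp add: sum_distrib_left)
  also have "(\<Sum>j<n. G j powr (q / 2)) \<le> real n powr (1 - q / 2) * (\<Sum>j<n. G j) powr (q / 2)"
  proof -
    have "(\<Sum>j<n. max 0 (G j) powr (q / 2)) \<le> real n powr (1 - q / 2) * (\<Sum>j<n. max 0 (G j)) powr (q / 2)"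
      using q by (intro power_mean[OF n]) auto
    moreover have "(\<Sum>j<n. max 0 (G j) powr (q / 2)) = (\<Sum>j<n. G j powr (q / 2))"
      using G0 by (intro sum.cong) auto
    moreover have "(\<Sum>j<n. max 0 (G j)) = (\<Sum>j<n. G j)"
      using G0 by (intro sum.cong) auto
    ultimately show ?thesis by simp
  qed
  also have "(\<Sum>j<n. G j) = integral {0..1} (\<lambda>x. (norm (F x))\<^sup>2)"
  proof -
    have "gp n 0 \<le> gp n n \<and> (\<lambda>x. (norm (F x))\<^sup>2) integrable_on {gp n 0..gp n n} \<and>
      integral {gp n 0..gp n n} (\<lambda>x. (norm (F x))\<^sup>2) = (\<Sum>j<n. integral {gp n j..gp n (Suc j)} (\<lambda>x. (norm (F x))\<^sup>2))"
    proof (rule sum_partition)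
      fix i assume i: "i < n"
      show "gp n i \<le> gp n (Suc i)" using gp_mono[OF n, of i "Suc i"] by simp
      show "(\<lambda>x. (norm (F x))\<^sup>2) integrable_on {gp n i..gp n (Suc i)}"
        using g[OF i] L2_int(4)[OF Fr] by auto
    qed
    then show ?thesis using gp_simps[OF n] G_def by simp
  qed
  also have "integral {0..1} (\<lambda>x. (norm (F x))\<^sup>2) powr (q / 2) = H_norm h powr q"
  proof -
    have I0: "integral {0..1} (\<lambda>x. (norm (F x))\<^sup>2) \<ge> 0"
      using Fr unfolding L2_01_def by (intro integral_nonneg) auto
    then show ?thesis unfolding H_norm_def F_def
      by (simp add: powr_half_sqrt[symmetric] powr_powr)
  qed
  finally have fin: "(\<Sum>j<n. mm n h j powr q) \<le> 2 powr q * (1 / real n) powr (q / 2) * (real n powr (1 - q / 2) * H_norm h powr q)"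
    using q by (simp add: mult_left_mono)
  have eqn: "(1 / real n) powr (q / 2) * real n powr (1 - q / 2) = real n powr (1 - q)"
  proof -
    have e: "(4 - q * 4) / 4 = 1 - q" by simp
    show ?thesis using np by (simp add: powr_divide powr_add[symmetric] powr_minus_divide[symmetric] field_simps) (simp only: e)
  qed
  have "2 powr q * (1 / real n) powr (q / 2) * (real n powr (1 - q / 2) * H_norm h powr q)
     = 2 powr q * ((1 / real n) powr (q / 2) * real n powr (1 - q / 2)) * H_norm h powr q"
    by (simp add: mult.assoc)
  then have "2 powr q * (1 / real n) powr (q / 2) * (real n powr (1 - q / 2) * H_norm h powr q)
     = 2 powr q * real n powr (1 - q) * H_norm h powr q" by (simp only: eqn)
  then show ?thesis using fin by linarith
qed

lemma qvar_bound:
  fixes h :: "real \<Rightarrow> 'a::euclidean_space"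
  assumes n: "n \<ge> 1" and h: "h \<in> H10" and q: "1 < q" "q < 2"
  shows "qvar_pow q (\<lambda>t. h t - interp n h t) \<le> ereal (2 powr (2 * q + 1) * real n powr (1 - q) * H_norm h powr q)"
  unfolding qvar_pow_def
proof (rule SUP_least)
  fix mt :: "nat \<times> (nat \<Rightarrow> real)" assume "mt \<in> {(m, t). t 0 = 0 \<and> t m = 1 \<and> (\<forall>i<m. t i \<le> t (Suc i))}"
  then obtain m and t :: "nat \<Rightarrow> real" where mt: "mt = (m, t)" "t 0 = 0" "t m = 1" "\<And>i. i < m \<Longrightarrow> t i \<le> t (Suc i)" by auto
  have "(\<Sum>i<m. norm ((h (t (Suc i)) - interp n h (t (Suc i))) - (h (t i) - interp n h (t i))) powr q)
    \<le> 2 powr q * 2 * (\<Sum>j<n. mm n h j powr q)"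
    using partition_bound[OF n h q(1) mt(2) mt(3) mt(4)] by blast
  also have "\<dots> \<le> 2 powr q * 2 * (2 powr q * real n powr (1 - q) * H_norm h powr q)"
    using sum_mm_bound[OF n h q] by (intro mult_left_mono) auto
  also have "\<dots> = 2 powr (2 * q + 1) * real n powr (1 - q) * H_norm h powr q"
  proof -
    have "(2::real) powr (2 * q + 1) = 2 powr (q + q + 1)" by (simp add: algebra_simps)
    also have "\<dots> = 2 powr q * 2 powr q * 2 powr 1" by (simp only: powr_add)
    finally have "2 powr (2 * q + 1) = 2 powr q * 2 powr q * (2::real)" by simp
    then show ?thesis by (simp add: mult_ac)
  qed
  finally show "ereal (\<Sum>i<fst mt. norm ((\<lambda>t. h t - interp n h t) (snd mt (Suc i)) - (\<lambda>t. h t - interp n h t) (snd mt i)) powr q)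
      \<le> ereal (2 powr (2 * q + 1) * real n powr (1 - q) * H_norm h powr q)"
    using mt(1) by simp
qed

lemma qvar_nonneg: "ereal 0 \<le> qvar_pow q f"
  unfolding qvar_pow_def
proof (rule SUP_upper2)
  show "(1::nat, \<lambda>i::nat. if i = 0 then 0 else (1::real)) \<in> {(m, t). t 0 = 0 \<and> t m = 1 \<and> (\<forall>i<m. t i \<le> t (Suc i))}"
    by auto
  show "ereal 0 \<le> ereal (\<Sum>i<fst (1::nat, \<lambda>i::nat. if i = 0 then 0 else (1::real)).
      norm (f (snd (1::nat, \<lambda>i::nat. if i = 0 then 0 else (1::real)) (Suc i)) -
            f (snd (1::nat, \<lambda>i::nat. if i = 0 then 0 else (1::real)) i)) powr q)"
    by (simp add: sum_nonneg)
qed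

theorem lemma7p3:
  fixes q :: real
  assumes "1 < q" and "q < 2"
  shows "\<exists>C. \<forall>n::nat. n \<ge> 1 \<longrightarrow>
           eps_q q (Hn n :: (real \<Rightarrow> 'a::euclidean_space) set) \<le> ereal (C * real n powr (1 / q - 1))"
proof (intro exI allI impI)
  fix n :: nat assume n: "n \<ge> 1"
  define C where "C = (2::real) powr (2 + 1 / q)"
  have q0: "q > 0" using assms by simp
  show "eps_q q (Hn n :: (real \<Rightarrow> 'a::euclidean_space) set) \<le> ereal (C * real n powr (1 / q - 1))"
    unfolding eps_q_def
  proof (rule SUP_least)
    fix h :: "real \<Rightarrow> 'a" assume "h \<in> {h \<in> H10. H_norm h \<noteq> 0}"
    then have h: "h \<in> H10" and hn: "H_norm h \<noteq> 0" by auto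
    define HN where "HN = H_norm h"
    have I0: "0 \<le> integral {0..1} (\<lambda>s. (norm (H_deriv h s))\<^sup>2)"
      using H10_rep[OF h] unfolding L2_01_def by (intro integral_nonneg) auto
    have HN0: "HN > 0" using hn I0 unfolding HN_def H_norm_def by (simp add: order_less_le)
    define K where "K = 2 powr (2 * q + 1) * real n powr (1 - q) * HN powr q"
    have K0: "K \<ge> 0" unfolding K_def by simp
    have pe: "H_proj (Hn n) h = interp n h" by (rule H_proj_eq[OF n h])
    have ub: "qvar_pow q (\<lambda>t. h t - interp n h t) \<le> ereal K"
      using qvar_bound[OF n h assms] unfolding K_def HN_def .
    have lb: "ereal 0 \<le> qvar_pow q (\<lambda>t. h t - interp n h t)" by (rule qvar_nonneg)
    obtain x where x: "qvar_pow q (\<lambda>t. h t - interp n h t) = ereal x"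
      using ub lb by (cases "qvar_pow q (\<lambda>t. h t - interp n h t)") auto
    have x0: "0 \<le> x" and xK: "x \<le> K" using ub lb x by auto
    have "x powr (1 / q) \<le> K powr (1 / q)" using x0 xK q0 by (intro powr_mono2) auto
    also have "K powr (1 / q) = C * real n powr (1 / q - 1) * HN"
    proof -
      have "K powr (1 / q) = (2 powr (2 * q + 1)) powr (1 / q) * (real n powr (1 - q)) powr (1 / q) * (HN powr q) powr (1 / q)"
        unfolding K_def by (simp add: powr_mult)
      also have "(2 powr (2 * q + 1)) powr (1 / q) = C"
        unfolding C_def using q0 by (simp add: powr_powr field_simps)
      also have "(real n powr (1 - q)) powr (1 / q) = real n powr (1 / q - 1)"
        using q0 by (simp add: powr_powr field_simps)
      also have "(HN powr q) powr (1 / q) = HN"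
        using q0 HN0 by (simp add: powr_powr)
      finally show ?thesis .
    qed
    finally have v: "x powr (1 / q) \<le> C * real n powr (1 / q - 1) * HN" .
    have "qvar_norm q (\<lambda>t. h t - H_proj (Hn n) h t) = ereal (x powr (1 / q))"
      unfolding pe qvar_norm_def x by simp
    then have "qvar_norm q (\<lambda>t. h t - H_proj (Hn n) h t) / ereal (H_norm h) = ereal (x powr (1 / q) / HN)"
      using HN0 unfolding HN_def by simp
    also have "x powr (1 / q) / HN \<le> C * real n powr (1 / q - 1)"
      using v HN0 by (simp add: divide_le_eq)
    finally show "qvar_norm q (\<lambda>t. h t - H_proj (Hn n) h t) / ereal (H_norm h) \<le> ereal (C * real n powr (1 / q - 1))"
      by simp
  qed
qed


end
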